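(* Let $n\ge 1$ be an integer and let $P\in\mathbb Z_{\ge0}[X]$ be a polynomial of degree $n$ with non-negative integer coefficients and $P(0)>0$. Define $h(j)=P(j)$ for $j\ge0$ and $h(j)=0$ for $j<0$. Then $\operatorname{hdepth}(h)\le 2^{n+1}$.
   Context: For a nonzero function $h:\mathbb Z\to\mathbb Z_{\ge 0}$ with $h(j)=0$ for all sufficiently negative $j$, and integers $k\le d$, set $\beta_k^d(h)=\sum_{j\le k}(-1)^{k-j}\binom{d-j}{k-j}h(j)$, and $\operatorname{hdepth}(h)=\max\{d\in\mathbb Z:\ \beta_k^d(h)\ge 0\text{ for all integers }k\le d\}$. *)

theory Defs
  imports "HOL-Computational_Algebra.Polynomial"
begin

text \<open>The sum is taken over the (finite, for h vanishing far to the left) set of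
  j \<le> k with h j \<noteq> 0; terms with h j = 0 contribute nothing.
  Only meaningful for k \<le> d (then d-j \<ge> k-j \<ge> 0).\<close>
definition hbeta :: "(int \<Rightarrow> int) \<Rightarrow> int \<Rightarrow> int \<Rightarrow> int" where
  "hbeta h k d = (\<Sum>j\<in>{j. j \<le> k \<and> h j \<noteq> 0}.
      (-1) ^ nat (k - j) * int (nat (d - j) choose nat (k - j)) * h j)"

definition hdepth :: "(int \<Rightarrow> int) \<Rightarrow> int" where
  "hdepth h = (GREATEST d. \<forall>k. k \<le> d \<longrightarrow> hbeta h k d \<ge> 0)"

end

theory Submission
  imports Defs
begin

lemma hbeta_alt:
  assumes h0: "\<forall>j<0. h j = 0" and k: "k \<ge> 0"
  shows "hbeta h k d = (\<Sum>j\<in>{0..k}. (-1) ^ nat (k - j) * int (nat (d - j) choose nat (k - j)) * h j)"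
  unfolding hbeta_def
  by (rule sum.mono_neutral_left) (use h0 in \<open>auto simp: not_less\<close>)

lemma two_choose: "2 * (m choose 2) = m * (m - 1)"
  by (simp add: times_binomial_minus1_eq)

lemma key_ineq:
  fixes P :: "int poly" and n :: nat
  assumes "n \<ge> 1" "degree P = n" "\<forall>i. coeff P i \<ge> 0" "poly P 0 > 0"
  shows "poly P 2 < 2 ^ n * poly P 1"
proof -
  have "2 ^ n * poly P 1 - poly P 2 = (\<Sum>i\<le>n. coeff P i * (2 ^ n - 2 ^ i))"
    using assms(2) by (simp add: poly_altdef sum_distrib_left sum_distrib_right sum_subtractf algebra_simps)
  also have "\<dots> \<ge> coeff P 0 * (2 ^ n - 2 ^ 0)"
  proof -
    have "(\<Sum>i\<le>n. coeff P i * (2 ^ n - 2 ^ i)) = coeff P 0 * (2 ^ n - 2 ^ 0) + (\<Sum>i\<in>{..n}-{0}. coeff P i * (2 ^ n - 2 ^ i))"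
      by (subst sum.remove[of _ 0]) auto
    moreover have "(\<Sum>i\<in>{..n}-{0}. coeff P i * (2 ^ n - 2 ^ i)) \<ge> (0::int)"
      by (rule sum_nonneg) (use assms(3) in \<open>auto intro!: mult_nonneg_nonneg simp: power_increasing\<close>)
    ultimately show ?thesis by linarith
  qed
  moreover have "coeff P 0 * (2 ^ n - 2 ^ 0) > (0::int)"
  proof -
    have "coeff P 0 > 0" using assms(4) by (simp add: poly_0_coeff_0)
    moreover have "(2::int) ^ n > 2 ^ 0" using assms(1) by (intro power_strict_increasing) auto
    ultimately show ?thesis by simp
  qed
  ultimately show ?thesis by linarith
qed

theorem theorem3p1:
  fixes P :: "int poly" and n :: nat and h :: "int \<Rightarrow> int"
  assumes "n \<ge> 1"
    and "degree P = n"
    and "\<forall>i. coeff P i \<ge> 0"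
    and "poly P 0 > 0"
    and "\<forall>j. h j = (if j \<ge> 0 then poly P j else 0)"
  shows "hdepth h \<le> 2 ^ (n + 1)"
proof -
  define S where "S = (\<lambda>d. \<forall>k. k \<le> d \<longrightarrow> hbeta h k d \<ge> 0)"
  define B :: int where "B = 2 ^ (n + 1)"
  have h0: "\<forall>j<0. h j = 0" using assms(5) by auto
  have hv: "h 0 = poly P 0" "h 1 = poly P 1" "h 2 = poly P 2" using assms(5) by auto
  have bnd: "d \<le> B" if "S d" for d
  proof (rule ccontr)
    assume "\<not> d \<le> B"
    hence dB: "d > B" by simp
    have B4: "B \<ge> 4" unfolding B_def using assms(1)
    proof -
      have "(2::int) ^ (n+1) \<ge> 2 ^ 2" using assms(1) by (intro power_increasing) auto
      thus "2 ^ (n + 1) \<ge> (4::int)" by simp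
    qed
    have b1: "hbeta h 1 d \<ge> 0" using that dB B4 unfolding S_def by auto
    have b2: "hbeta h 2 d \<ge> 0" using that dB B4 unfolding S_def by auto
    have e1: "hbeta h 1 d = poly P 1 - d * poly P 0"
    proof -
      have "{0..1::int} = {0,1}" by auto
      moreover have "int (nat d) = d" using dB B4 by simp
      ultimately show ?thesis using dB B4 by (simp add: hbeta_alt[OF h0] hv)
    qed
    have e2: "2 * hbeta h 2 d = d * (d - 1) * poly P 0 - 2 * (d - 1) * poly P 1 + 2 * poly P 2"
    proof -
      have s: "{0..2::int} = {0,1,2}" by auto
      have n2: "nat (2 - 0) = 2" "nat (2 - 1) = 1" "nat (2-2) = 0" by auto
      have c2: "2 * int (nat d choose 2) = d * (d - 1)"
      proof -
        have "2 * int (nat d choose 2) = int (2 * (nat d choose 2))" by simp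
        also have "\<dots> = int (nat d * (nat d - 1))" by (simp only: two_choose)
        also have "\<dots> = d * (d - 1)" using dB B4 by (simp add: of_nat_diff)
        finally show ?thesis .
      qed
      have c1: "int (nat (d - 1) choose 1) = d - 1" using dB B4 by simp
      have "hbeta h 2 d = int (nat d choose 2) * poly P 0 - int (nat (d - 1) choose 1) * poly P 1 + poly P 2"
        by (simp add: hbeta_alt[OF h0] hv s n2 nat_diff_distrib)
      hence "2 * hbeta h 2 d = (2 * int (nat d choose 2)) * poly P 0 - 2 * int (nat (d - 1) choose 1) * poly P 1 + 2 * poly P 2"
        by (simp add: algebra_simps)
      thus ?thesis using c1 c2 by simp
    qed
    have p0: "poly P 0 > 0" using assms(4) .
    have p1: "poly P 1 \<ge> d * poly P 0" using b1 e1 by simp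
    have p1pos: "poly P 1 > 0" using p1 p0 dB B4
      by (smt (verit) mult_pos_pos)
    have "2 * poly P 2 \<ge> 2 * (d - 1) * poly P 1 - d * (d - 1) * poly P 0" using b2 e2 by simp
    moreover have "d * (d - 1) * poly P 0 \<le> (d - 1) * poly P 1"
    proof -
      have "(d - 1) * (d * poly P 0) \<le> (d - 1) * poly P 1"
        using p1 dB B4 by (intro mult_left_mono) auto
      thus ?thesis by (simp add: algebra_simps)
    qed
    ultimately have "2 * poly P 2 \<ge> (d - 1) * poly P 1" by (simp add: algebra_simps)
    moreover have "poly P 2 < 2 ^ n * poly P 1" using key_ineq[OF assms(1-4)] .
    ultimately have "(d - 1) * poly P 1 < (2 * 2 ^ n) * poly P 1" by simp
    hence "d - 1 < 2 * 2 ^ n" using p1pos by (simp add: mult_less_cancel_right)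
    thus False using dB unfolding B_def by simp
  qed
  have Sm1: "S (-1)" unfolding S_def hbeta_def using h0 by (auto intro!: sum.neutral)
  define T where "T = {d. S d \<and> -1 \<le> d}"
  have fT: "finite T" unfolding T_def using bnd by (auto intro: finite_subset[of _ "{-1..B}"])
  have mT: "-1 \<in> T" unfolding T_def using Sm1 by simp
  have MT: "Max T \<in> T" using fT mT by (intro Max_in) auto
  have "hdepth h = Max T"
    unfolding hdepth_def S_def[symmetric]
  proof (rule Greatest_equality)
    show "S (Max T)" using MT unfolding T_def by simp
    fix y assume "S y"
    show "y \<le> Max T"
    proof (cases "y \<ge> -1")
      case True thus ?thesis using \<open>S y\<close> fT unfolding T_def by (intro Max_ge) auto
    next
      case False thus ?thesis using MT unfolding T_def by simp
    qed
  qed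
  thus ?thesis using bnd MT unfolding T_def B_def by auto
qed

end
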